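(* For integers $0\le l\le m$, let $d_{l,m}=2^{-2m}\sum_{k=l}^{m}2^{k}\binom{2m-2k}{m-k}\binom{m+k}{m}\binom{k}{l}$. Then $$d_{l,m}=\sum_{j=0}^{l}\sum_{s=0}^{m-l}\sum_{k=s+l}^{m}\frac{(-1)^{k-l-s}}{2^{3k}}\binom{2k}{k}\binom{2m+1}{2s+2j}\binom{m-s-j}{m-k}\binom{s+j}{j}\binom{k-s-j}{l-j}.$$ Equivalently, with $P_m(a)=\sum_{l=0}^m d_{l,m}a^l$, $$P_{m}(a)=\sum_{j=0}^{m}\binom{2m+1}{2j}(a+1)^{j}\sum_{k=0}^{m-j}\binom{m-j}{k}\binom{2(m-k)}{m-k}2^{-3(m-k)}(a-1)^{m-k-j}.$$
   Context: Binomial coefficients $\binom{n}{k}$ with $k<0$ or $k>n$ (for $n\ge 0$) are taken to be $0$. *)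

theory Defs
  imports Complex_Main
begin

definition d_coef :: "nat \<Rightarrow> nat \<Rightarrow> real" where
  "d_coef l m = (1 / 2 ^ (2*m)) *
     (\<Sum>k=l..m. 2 ^ k * real ((2*m - 2*k) choose (m - k)) * real ((m + k) choose m) * real (k choose l))"

definition P_poly :: "nat \<Rightarrow> real \<Rightarrow> real" where
  "P_poly m a = (\<Sum>l=0..m. d_coef l m * a ^ l)"

end

theory Submission
  imports Defs
begin
lemma even_part:
  fixes a b :: real
  shows "(a+b)^(2*m+1) + (a-b)^(2*m+1) = 2*a*(\<Sum>J\<le>m. real ((2*m+1) choose (2*J)) * (b^2)^J * (a^2)^(m-J))"
proof -
  let ?N = "2*m+1"
  define h where "h k = real (?N choose k) * (b^k + (-b)^k) * a^(?N-k)" for k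
  have 1: "(b+a)^?N = (\<Sum>k\<le>?N. real (?N choose k) * b^k * a^(?N-k))"
    by (rule binomial_ring)
  have 2: "(-b+a)^?N = (\<Sum>k\<le>?N. real (?N choose k) * (-b)^k * a^(?N-k))"
    by (rule binomial_ring)
  have "(a+b)^?N + (a-b)^?N = (b+a)^?N + (-b+a)^?N"
    by (metis add.commute diff_conv_add_uminus)
  also have "\<dots> = (\<Sum>k\<le>?N. h k)"
    unfolding 1 2 sum.distrib[symmetric]
    by (rule sum.cong[OF refl]) (simp only: h_def ring_distribs)
  also have "\<dots> = (\<Sum>k<2*(m+1). if even k then h k else 0)"
    by (rule sum.cong) (auto simp: h_def lessThan_Suc_atMost[symmetric])
  also have "\<dots> = (\<Sum>i<m+1. h (2*i)) + (\<Sum>i<m+1. (0::real))"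
    by (rule sum_split_even_odd)
  also have "\<dots> = (\<Sum>i\<le>m. 2*a*(real (?N choose (2*i)) * (b^2)^i * (a^2)^(m-i)))"
  proof -
    have "h (2*i) = 2*a*(real (?N choose (2*i)) * (b^2)^i * (a^2)^(m-i))" if "i \<le> m" for i
    proof -
      have q: "?N - 2*i = Suc (2*(m-i))" using that by simp
      have "a^(?N - 2*i) = a * (a^2)^(m-i)" unfolding q
        by (simp only: power_Suc power_mult)
      then show ?thesis by (simp add: h_def power_mult[symmetric] algebra_simps)
    qed
    then show ?thesis by (simp add: lessThan_Suc_atMost)
  qed
  finally show ?thesis by (simp add: sum_distrib_left)
qed

definition FF :: "nat \<Rightarrow> real \<Rightarrow> real" where
  "FF m w = (\<Sum>J\<le>m. real ((2*m+1) choose (2*J)) * w^J * (1+w)^(m-J))"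

lemma FF_sqrt:
  assumes "w \<ge> 0"
  shows "2 * sqrt (1+w) * FF m w = (sqrt (1+w) + sqrt w)^(2*m+1) + (sqrt (1+w) - sqrt w)^(2*m+1)"
proof -
  have h1: "(sqrt (1+w))^2 = 1+w" using assms by simp
  have h2: "(sqrt w)^2 = w" using assms by simp
  show ?thesis by (simp only: even_part h1 h2 FF_def)
qed

lemma FF_rec:
  assumes "w \<ge> 0"
  shows "FF (m+2) w = (2+4*w) * FF (m+1) w - FF m w"
proof -
  define s where "s = sqrt (1+w)"
  define r where "r = sqrt w"
  have s2: "s^2 = 1+w" using assms by (simp add: s_def)
  have r2: "r^2 = w" using assms by (simp add: r_def)
  have sp: "s > 0" using assms by (simp add: s_def)
  have k1: "(s+r)^4 = (2+4*w)*(s+r)^2 - 1"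
  proof -
    have "(s+r)^4 = ((s+r)^2)^2" by simp
    also have "(s+r)^2 = 1 + 2*w + 2*s*r" using s2 r2 by (simp add: power2_sum)
    finally have "(s+r)^4 = (1 + 2*w + 2*s*r)^2" .
    also have "\<dots> = 1 + 4*w + 4*w^2 + 4*(1+2*w)*s*r + 4*s^2*r^2"
      by (simp add: power2_eq_square algebra_simps)
    also have "\<dots> = (2+4*w)*(1 + 2*w + 2*s*r) - 1"
      using s2 r2 by (simp add: power2_eq_square algebra_simps)
    also have "1 + 2*w + 2*s*r = (s+r)^2" using s2 r2 by (simp add: power2_sum)
    finally show ?thesis .
  qed
  have k2: "(s-r)^4 = (2+4*w)*(s-r)^2 - 1"
  proof -
    have "(s-r)^4 = ((s-r)^2)^2" by simp
    also have "(s-r)^2 = 1 + 2*w - 2*s*r" using s2 r2 by (simp add: power2_diff)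
    finally have "(s-r)^4 = (1 + 2*w - 2*s*r)^2" .
    also have "\<dots> = 1 + 4*w + 4*w^2 - 4*(1+2*w)*s*r + 4*s^2*r^2"
      by (simp add: power2_eq_square algebra_simps)
    also have "\<dots> = (2+4*w)*(1 + 2*w - 2*s*r) - 1"
      using s2 r2 by (simp add: power2_eq_square algebra_simps)
    also have "1 + 2*w - 2*s*r = (s-r)^2" using s2 r2 by (simp add: power2_diff)
    finally show ?thesis .
  qed
  have e: "x^(2*(m+2)+1) = (2+4*w) * x^(2*(m+1)+1) - x^(2*m+1)"
    if "x^4 = (2+4*w)*x^2 - 1" for x :: real
  proof -
    have "x^(2*(m+2)+1) = x^((2*m+1)+4)" by (rule arg_cong[where f="\<lambda>n. x^n"]) simp
    also have "\<dots> = x^(2*m+1) * x^4" by (rule power_add)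
    finally have A: "x^(2*(m+2)+1) = x^(2*m+1) * x^4" .
    have "x^(2*(m+1)+1) = x^((2*m+1)+2)" by (rule arg_cong[where f="\<lambda>n. x^n"]) simp
    also have "\<dots> = x^(2*m+1) * x^2" by (rule power_add)
    finally have B: "x^(2*(m+1)+1) = x^(2*m+1) * x^2" .
    show ?thesis unfolding A B that by (simp add: algebra_simps)
  qed
  define c where "c = 2+4*w"
  define U0 where "U0 = (s+r)^(2*m+1)"
  define U1 where "U1 = (s+r)^(2*(m+1)+1)"
  define U2 where "U2 = (s+r)^(2*(m+2)+1)"
  define V0 where "V0 = (s-r)^(2*m+1)"
  define V1 where "V1 = (s-r)^(2*(m+1)+1)"
  define V2 where "V2 = (s-r)^(2*(m+2)+1)"
  have EU: "U2 = c*U1 - U0" unfolding U0_def U1_def U2_def c_def by (rule e[OF k1])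
  have EV: "V2 = c*V1 - V0" unfolding V0_def V1_def V2_def c_def by (rule e[OF k2])
  have F0: "2*s*FF m w = U0 + V0" unfolding U0_def V0_def s_def r_def by (rule FF_sqrt[OF assms])
  have F1: "2*s*FF (m+1) w = U1 + V1" unfolding U1_def V1_def s_def r_def by (rule FF_sqrt[OF assms])
  have F2: "2*s*FF (m+2) w = U2 + V2" unfolding U2_def V2_def s_def r_def by (rule FF_sqrt[OF assms])
  have "2*s*FF (m+2) w = 2*s*(c * FF (m+1) w - FF m w)"
  proof -
    have "2*s*FF (m+2) w = c*(U1+V1) - (U0+V0)" unfolding F2 EU EV by (simp add: algebra_simps)
    also have "\<dots> = c*(2*s*FF (m+1) w) - 2*s*FF m w" unfolding F0 F1 ..
    finally show ?thesis by (simp add: algebra_simps)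
  qed
  then show ?thesis using sp by (simp add: c_def)
qed


lemma sum_shift_guard:
  fixes f :: "nat \<Rightarrow> 'a::comm_monoid_add"
  assumes "j \<le> m"
  shows "(\<Sum>i\<le>m. if j \<le> i then f (i - j) else 0) = (\<Sum>t\<le>m-j. f t)"
proof -
  have "(\<Sum>i\<le>m. if j \<le> i then f (i - j) else 0) = (\<Sum>i\<in>{j..m}. f (i - j))"
    by (rule sum.mono_neutral_cong_right) auto
  also have "\<dots> = (\<Sum>t\<in>{0..m-j}. f t)"
    using sum.shift_bounds_cl_nat_ivl[of "\<lambda>i. f (i - j)" 0 j "m-j"] assms by simp
  finally show ?thesis by (simp add: atLeast0AtMost)
qed

lemma sum_guard_le:
  fixes g :: "nat \<Rightarrow> 'a::comm_monoid_add"
  assumes "n \<le> m"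
  shows "(\<Sum>J\<le>m. if J \<le> n then g J else 0) = (\<Sum>J\<le>n. g J)"
  using assms by (intro sum.mono_neutral_cong_right) auto

definition GK :: "nat \<Rightarrow> nat \<Rightarrow> real \<Rightarrow> real" where
  "GK K m z = (\<Sum>n\<le>K. real ((m+n) choose (2*n)) * z^n)"

lemma GK_trunc:
  assumes "m \<le> K" shows "GK K m z = GK m m z"
  unfolding GK_def using assms by (intro sum.mono_neutral_cong_right) auto

lemma pascal2:
  "((m+2+n) choose (2*n)) + ((m+n) choose (2*n)) = 2*((m+1+n) choose (2*n)) + (if n = 0 then 0 else (m+n) choose (2*n-2))"
proof (cases n)
  case 0 then show ?thesis by simp
next
  case (Suc k)
  have e: "2*n = Suc (Suc (2*k))" "2*n-2 = 2*k" using Suc by auto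
  have m1: "m+2+n = Suc (Suc (m+n))" "m+1+n = Suc (m+n)" by auto
  show ?thesis unfolding e m1 using Suc by simp
qed

lemma GK_rec:
  "GK (Suc K) (m+2) z = 2 * GK (Suc K) (m+1) z - GK (Suc K) m z + z * GK K (m+1) z"
proof -
  have p: "real ((m+2+n) choose (2*n)) = 2*real ((m+1+n) choose (2*n)) - real ((m+n) choose (2*n))
      + (if n = 0 then 0 else real ((m+n) choose (2*n-2)))" for n
    using arg_cong[OF pascal2[of m n], of real] by (simp split: if_splits)
  have "GK (Suc K) (m+2) z = 2 * GK (Suc K) (m+1) z - GK (Suc K) m z
      + (\<Sum>n\<le>Suc K. (if n = 0 then 0 else real ((m+n) choose (2*n-2))) * z^n)"
    unfolding GK_def p by (simp add: sum.distrib sum_subtractf sum_distrib_left algebra_simps)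
  also have "(\<Sum>n\<le>Suc K. (if n = 0 then 0 else real ((m+n) choose (2*n-2))) * z^n) = z * GK K (m+1) z"
    unfolding GK_def sum.atMost_Suc_shift by (simp add: sum_distrib_left algebra_simps)
  finally show ?thesis .
qed

definition G :: "nat \<Rightarrow> real \<Rightarrow> real" where "G m z = GK m m z"

lemma G_rec: "G (m+2) z = (2+z) * G (m+1) z - G m z"
proof -
  have "G (m+2) z = GK (Suc (m+1)) (m+2) z" by (simp add: G_def)
  also have "\<dots> = 2 * GK (Suc (m+1)) (m+1) z - GK (Suc (m+1)) m z + z * GK (m+1) (m+1) z"
    by (rule GK_rec)
  also have "\<dots> = (2+z) * G (m+1) z - G m z"
    using GK_trunc[of "m+1" "Suc (m+1)"] GK_trunc[of m "Suc (m+1)"]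
    by (simp add: G_def algebra_simps)
  finally show ?thesis .
qed

lemma FF_G: assumes "w \<ge> 0" shows "FF m w = G m (4*w)"
proof -
  have "FF m w = G m (4*w) \<and> FF (m+1) w = G (m+1) (4*w)"
  proof (induction m)
    case 0
    have "(3::nat) choose 2 = 3" by (simp add: choose_two)
    moreover have "Suc (Suc 0) choose 2 = 1" by (simp add: choose_two)
    ultimately show ?case by (simp add: FF_def G_def GK_def)
  next
    case (Suc m)
    then show ?case using FF_rec[OF assms, of m] G_rec[of m "4*w"] by simp
  qed
  then show ?thesis by simp
qed

definition AA :: "nat \<Rightarrow> nat \<Rightarrow> real" where
  "AA m n = (\<Sum>J\<le>n. real ((2*m+1) choose (2*J)) * real ((m-J) choose (n-J)))"

lemma FF_expand: "FF m w = (\<Sum>n\<le>m. AA m n * w^n)"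
proof -
  have b: "(1+w)^(m-J) = (\<Sum>i\<le>m-J. real ((m-J) choose i) * w^i)" for J
    using binomial_ring[of w 1 "m-J"] by (simp add: add.commute)
  have "FF m w = (\<Sum>J\<le>m. \<Sum>i\<le>m-J. real ((2*m+1) choose (2*J)) * real ((m-J) choose i) * w^(J+i))"
    unfolding FF_def b by (simp add: sum_distrib_left power_add algebra_simps)
  also have "\<dots> = (\<Sum>J\<le>m. \<Sum>n\<le>m. if J \<le> n then real ((2*m+1) choose (2*J)) * real ((m-J) choose (n-J)) * w^n else 0)"
    by (rule sum.cong[OF refl], subst sum_shift_guard[symmetric]) (auto intro!: sum.cong)
  also have "\<dots> = (\<Sum>n\<le>m. \<Sum>J\<le>m. if J \<le> n then real ((2*m+1) choose (2*J)) * real ((m-J) choose (n-J)) * w^n else 0)"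
    by (rule sum.swap)
  also have "\<dots> = (\<Sum>n\<le>m. AA m n * w^n)"
    by (rule sum.cong[OF refl], subst sum_guard_le) (auto simp: AA_def sum_distrib_right)
  finally show ?thesis .
qed

lemma coeff_eq_nonneg:
  fixes c d :: "nat \<Rightarrow> real"
  assumes "\<And>w. w \<ge> 0 \<Longrightarrow> (\<Sum>i\<le>n. c i * w^i) = (\<Sum>i\<le>n. d i * w^i)" "k \<le> n"
  shows "c k = d k"
proof (rule ccontr)
  assume ne: "c k \<noteq> d k"
  have "finite {z. (\<Sum>i\<le>n. (c i - d i) * z^i) = 0}"
    by (rule polyfun_roots_finite[of "\<lambda>i. c i - d i" k]) (use ne assms(2) in auto)
  moreover have "{0::real..} \<subseteq> {z. (\<Sum>i\<le>n. (c i - d i) * z^i) = 0}"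
    using assms(1) by (auto simp: left_diff_distrib sum_subtractf)
  ultimately show False using infinite_Ici finite_subset by blast
qed

lemma AA_closed: assumes "n \<le> m" shows "AA m n = 4^n * real ((m+n) choose (2*n))"
proof -
  have "\<And>w. w \<ge> 0 \<Longrightarrow> (\<Sum>i\<le>m. AA m i * w^i) = (\<Sum>i\<le>m. (4^i * real ((m+i) choose (2*i))) * w^i)"
    using FF_G FF_expand by (simp add: G_def GK_def power_mult_distrib algebra_simps)
  then show ?thesis by (rule coeff_eq_nonneg[OF _ assms])
qed

lemma beta_rec:
  fixes g :: "nat \<Rightarrow> real"
  shows "(\<Sum>t\<le>Suc p. real (Suc p choose t) * g t) = (\<Sum>t\<le>p. real (p choose t) * g t) + (\<Sum>t\<le>p. real (p choose t) * g (Suc t))"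
proof -
  have "(\<Sum>t\<le>Suc p. real (Suc p choose t) * g t) = g 0 + (\<Sum>t\<le>p. real (Suc p choose Suc t) * g (Suc t))"
    by (subst sum.atMost_Suc_shift) simp
  also have "\<dots> = g 0 + (\<Sum>t\<le>p. real (p choose Suc t) * g (Suc t)) + (\<Sum>t\<le>p. real (p choose t) * g (Suc t))"
    by (simp add: sum.distrib algebra_simps)
  also have "g 0 + (\<Sum>t\<le>p. real (p choose Suc t) * g (Suc t)) = (\<Sum>t\<le>Suc p. real (p choose t) * g t)"
    by (subst sum.atMost_Suc_shift) simp
  also have "\<dots> = (\<Sum>t\<le>p. real (p choose t) * g t)"
    by simp
  finally show ?thesis .
qed

definition cb :: "nat \<Rightarrow> real" where "cb k = real ((2*k) choose k)"

definition beta :: "nat \<Rightarrow> nat \<Rightarrow> real" where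
  "beta n p = (\<Sum>t\<le>p. real (p choose t) * ((-1/4)^t * cb (n+t)))"

definition fcl :: "nat \<Rightarrow> nat \<Rightarrow> real" where
  "fcl n p = fact (2*p) * fact (2*n) / (4^p * fact p * fact n * fact (n+p))"

lemma fcl_rec: "fcl n (Suc p) = fcl n p - fcl (Suc n) p / 4"
proof -
  define X where "X = fcl n p"
  have pos: "(fact p::real) > 0" "(fact n::real) > 0" "(fact (n+p)::real) > 0" by auto
  have 1: "fcl n (Suc p) = X * (2*real p+1) / (2*(real n + real p + 1))"
  proof -
    have a: "fact (2*Suc p) = (2*real p+2)*(2*real p+1)*(fact (2*p)::real)"
      by (simp add: algebra_simps)
    have c: "fact (n + Suc p) = (real n + real p + 1) * (fact (n+p)::real)"
      by (simp add: algebra_simps)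
    have d: "fact (Suc p) = (real p + 1) * (fact p :: real)" by simp
    show ?thesis unfolding X_def fcl_def a c d power_Suc
      using pos by (simp add: divide_simps) (simp add: algebra_simps)
  qed
  have 2: "fcl (Suc n) p = X * 2 * (2*real n+1) / (real n + real p + 1)"
  proof -
    have b: "fact (2*Suc n) = (2*real n+2)*(2*real n+1)*(fact (2*n)::real)"
      by (simp add: algebra_simps)
    have c2: "fact (Suc n + p) = (real n + real p + 1) * (fact (n+p)::real)"
      by (simp add: algebra_simps)
    have e: "fact (Suc n) = (real n + 1) * (fact n :: real)" by simp
    show ?thesis unfolding X_def fcl_def b c2 e
      using pos by (simp add: divide_simps)
  qed
  show ?thesis unfolding 1 2 X_def[symmetric] by (simp add: divide_simps) (simp add: algebra_simps)
qed

lemma beta_closed: "beta n p = fcl n p"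
proof (induction p arbitrary: n)
  case 0
  then show ?case by (simp add: beta_def cb_def fcl_def binomial_fact power2_eq_square mult_2)
next
  case (Suc p)
  define g where "g t = (-1/4::real)^t * cb (n+t)" for t
  have gs: "g (Suc t) = - (1/4) * ((-1/4::real)^t * cb (Suc n+t))" for t
    unfolding g_def by (simp only: add_Suc_right add_Suc power_Suc)
  have "beta n (Suc p) = (\<Sum>t\<le>p. real (p choose t) * g t) + (\<Sum>t\<le>p. real (p choose t) * g (Suc t))"
    unfolding beta_def g_def[symmetric] by (rule beta_rec)
  also have "\<dots> = beta n p - beta (Suc n) p / 4"
    unfolding gs beta_def g_def
    by (simp add: sum_divide_distrib sum_distrib_left algebra_simps sum_negf)
  finally show ?case using Suc fcl_rec by simp
qed



definition cc :: "nat \<Rightarrow> real" where "cc k = real ((2*k) choose k) / 2^(3*k)"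

definition BB :: "nat \<Rightarrow> nat \<Rightarrow> real" where
  "BB m n = (\<Sum>t\<le>m-n. real ((m-n) choose t) * cc (n+t) * (-2)^t)"

definition ee :: "nat \<Rightarrow> nat \<Rightarrow> real" where
  "ee m n = (1 / 2^(2*m)) * 2^n * real ((2*m - 2*n) choose (m - n)) * real ((m + n) choose m)"

lemma BB_beta: "BB m n = beta n (m-n) / 8^n"
proof -
  have "cc (n+t) * (-2)^t = (-1/4)^t * cb (n+t) / 8^n" for t
  proof -
    have "(2::real)^(3*(n+t)) = 8^n * 8^t" by (simp add: power_add power_mult)
    moreover have "((-2)::real)^t = (-1/4)^t * 8^t"
      by (simp flip: power_mult_distrib)
    ultimately show ?thesis by (simp add: cc_def cb_def field_simps)
  qed
  then show ?thesis unfolding BB_def beta_def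
    by (simp add: sum_divide_distrib mult.assoc)
qed

lemma AB_ee: assumes "n \<le> m" shows "AA m n * BB m n = ee m n"
proof -
  obtain p where m: "m = n + p" using assms le_Suc_ex by blast
  have f1: "real ((m+n) choose (2*n)) = fact (m+n) / (fact (2*n) * fact p)"
    using m by (simp add: binomial_fact)
  have f2: "real ((2*m - 2*n) choose (m - n)) = fact (2*p) / (fact p * fact p)"
    using m by (simp add: binomial_fact mult_2)
  have f3: "real ((m+n) choose m) = fact (m+n) / (fact m * fact n)"
    by (simp add: binomial_fact)
  have pw1: "(2::real)^(2*m) = 4^n * 4^p"
  proof -
    have "(2::real)^(2*m) = (2^2)^m" by (rule power_mult)
    also have "\<dots> = 4^n * 4^p" using m by (simp add: power_add)
    finally show ?thesis .
  qed
  have pw2: "(8::real)^n = 4^n * 2^n"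
    by (simp flip: power_mult_distrib)
  have h4: "(4::real)^n = 2^n * 2^n" by (simp flip: power_mult_distrib)
  note pw = pw1 pw2
  have pos: "(fact n::real) > 0" "(fact p::real) > 0" "(fact m::real) > 0" "(fact (2*n)::real) > 0" by auto
  show ?thesis
    unfolding AA_closed[OF assms] BB_beta beta_closed fcl_def ee_def f1 f2 f3 pw
    using pos m by (simp add: field_simps h4)
qed



lemma taylor:
  fixes h :: "nat \<Rightarrow> real"
  shows "(\<Sum>r\<le>M. real (M choose r) * h r * (x-2)^r)
       = (\<Sum>s\<le>M. real (M choose s) * x^s * (\<Sum>t\<le>M-s. real ((M-s) choose t) * h (s+t) * (-2)^t))"
proof -
  have b: "(x-2)^r = (\<Sum>s\<le>r. real (r choose s) * x^s * (-2)^(r-s))" for r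
    using binomial_ring[of x "-2" r] by simp
  define G where "G s r = real (M choose r) * h r * (real (r choose s) * x^s * (-2)^(r-s))" for s r
  have "(\<Sum>r\<le>M. real (M choose r) * h r * (x-2)^r) = (\<Sum>r\<le>M. \<Sum>s\<le>M. if s \<le> r then G s r else 0)"
    by (rule sum.cong[OF refl]) (simp add: b sum_guard_le sum_distrib_left G_def)
  also have "\<dots> = (\<Sum>s\<le>M. \<Sum>r\<le>M. if s \<le> r then G s r else 0)"
    by (rule sum.swap)
  also have "\<dots> = (\<Sum>s\<le>M. \<Sum>t\<le>M-s. G s (s+t))"
  proof (rule sum.cong[OF refl])
    fix s assume s: "s \<in> {..M}"
    have "(\<Sum>r\<le>M. if s \<le> r then G s r else 0) = (\<Sum>r\<le>M. if s \<le> r then G s (s + (r - s)) else 0)"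
      by (rule sum.cong) auto
    also have "\<dots> = (\<Sum>t\<le>M-s. G s (s+t))"
      using s by (subst sum_shift_guard) auto
    finally show "(\<Sum>r\<le>M. if s \<le> r then G s r else 0) = (\<Sum>t\<le>M-s. G s (s+t))" .
  qed
  also have "\<dots> = (\<Sum>s\<le>M. real (M choose s) * x^s * (\<Sum>t\<le>M-s. real ((M-s) choose t) * h (s+t) * (-2)^t))"
  proof (rule sum.cong[OF refl])
    fix s assume s: "s \<in> {..M}"
    have "G s (s+t) = real (M choose s) * x^s * (real ((M-s) choose t) * h (s+t) * (-2)^t)" if "t \<le> M - s" for t
    proof -
      have "(M choose (s+t)) * ((s+t) choose s) = (M choose s) * ((M-s) choose t)"
        using choose_mult[of s "s+t" M] that s by simp
      then have "real (M choose (s+t)) * real ((s+t) choose s) = real (M choose s) * real ((M-s) choose t)"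
        by (metis of_nat_mult)
      then show ?thesis unfolding G_def by (simp add: algebra_simps)
    qed
    then show "(\<Sum>t\<le>M-s. G s (s+t)) = real (M choose s) * x^s * (\<Sum>t\<le>M-s. real ((M-s) choose t) * h (s+t) * (-2)^t)"
      by (simp add: sum_distrib_left)
  qed
  finally show ?thesis .
qed

definition RHS2 :: "nat \<Rightarrow> real \<Rightarrow> real" where
  "RHS2 m a = (\<Sum>j=0..m. real ((2*m+1) choose (2*j)) * (a + 1) ^ j *
         (\<Sum>k=0..m-j. real ((m - j) choose k) * real ((2*(m-k)) choose (m-k)) / 2 ^ (3*(m-k))
            * (a - 1) ^ (m - k - j)))"

lemma inner_reflect:
  assumes "j \<le> m"
  shows "(\<Sum>k=0..m-j. real ((m - j) choose k) * real ((2*(m-k)) choose (m-k)) / 2 ^ (3*(m-k)) * y ^ (m - k - j))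
     = (\<Sum>r\<le>m-j. real ((m-j) choose r) * cc (j+r) * y^r)"
proof -
  have "(\<Sum>k=0..m-j. real ((m - j) choose k) * real ((2*(m-k)) choose (m-k)) / 2 ^ (3*(m-k)) * y ^ (m - k - j))
    = (\<Sum>k=0..m-j. real ((m - j) choose k) * cc (m-k) * y ^ (m - k - j))"
    by (simp add: cc_def)
  also have "\<dots> = (\<Sum>r=0..m-j. real ((m - j) choose (m-j-r)) * cc (m-(m-j-r)) * y ^ (m - (m-j-r) - j))"
    by (subst sum.atLeastAtMost_rev) simp
  also have "\<dots> = (\<Sum>r=0..m-j. real ((m-j) choose r) * cc (j+r) * y^r)"
  proof (rule sum.cong[OF refl])
    fix r assume "r \<in> {0..m-j}"
    then have r: "r \<le> m - j" by simp
    have "(m-j) choose (m-j-r) = (m-j) choose r" using r binomial_symmetric[of r "m-j"] by simp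
    moreover have "m-(m-j-r) = j+r" "m - (m-j-r) - j = r" using r assms by auto
    ultimately show "real ((m - j) choose (m-j-r)) * cc (m-(m-j-r)) * y ^ (m - (m-j-r) - j) = real ((m-j) choose r) * cc (j+r) * y^r"
      by simp
  qed
  finally show ?thesis by (simp add: atLeast0AtMost)
qed

lemma RHS2_eq: "RHS2 m a = (\<Sum>n\<le>m. AA m n * BB m n * (a+1)^n)"
proof -
  define x where "x = a + 1"
  have am: "a - 1 = x - 2" by (simp add: x_def)
  define f where "f j s = real ((2*m+1) choose (2*j)) * x^j * (real ((m-j) choose s) * x^s * BB m (j+s))" for j s
  have "RHS2 m a = (\<Sum>j=0..m. \<Sum>s\<le>m-j. f j s)"
    unfolding RHS2_def
  proof (rule sum.cong[OF refl])
    fix j assume j: "j \<in> {0..m}"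
    have "(\<Sum>r\<le>m-j. real ((m-j) choose r) * cc (j+r) * (x-2)^r)
        = (\<Sum>s\<le>m-j. real ((m-j) choose s) * x^s * (\<Sum>t\<le>m-j-s. real ((m-j-s) choose t) * cc (j+(s+t)) * (-2)^t))"
      by (rule taylor)
    also have "\<dots> = (\<Sum>s\<le>m-j. real ((m-j) choose s) * x^s * BB m (j+s))"
      by (simp add: BB_def add.assoc diff_diff_eq)
    finally have e: "(\<Sum>r\<le>m-j. real ((m-j) choose r) * cc (j+r) * (x-2)^r) = (\<Sum>s\<le>m-j. real ((m-j) choose s) * x^s * BB m (j+s))" .
    show "real ((2*m+1) choose (2*j)) * (a + 1) ^ j *
         (\<Sum>k=0..m-j. real ((m - j) choose k) * real ((2*(m-k)) choose (m-k)) / 2 ^ (3*(m-k)) * (a - 1) ^ (m - k - j))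
        = (\<Sum>s\<le>m-j. f j s)"
    proof -
      have jle: "j \<le> m" using j by simp
      have i: "(\<Sum>k=0..m-j. real ((m - j) choose k) * real ((2*(m-k)) choose (m-k)) / 2 ^ (3*(m-k)) * (a - 1) ^ (m - k - j))
          = (\<Sum>s\<le>m-j. real ((m-j) choose s) * x^s * BB m (j+s))"
        by (subst inner_reflect[OF jle]) (simp only: am e)
      show ?thesis unfolding i by (simp add: f_def sum_distrib_left x_def)
    qed
  qed
  also have "\<dots> = (\<Sum>j\<le>m. \<Sum>n\<le>m. if j \<le> n then f j (n - j) else 0)"
    unfolding atLeast0AtMost by (rule sum.cong[OF refl]) (simp add: sum_shift_guard)
  also have "\<dots> = (\<Sum>n\<le>m. \<Sum>j\<le>m. if j \<le> n then f j (n - j) else 0)"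
    by (rule sum.swap)
  also have "\<dots> = (\<Sum>n\<le>m. AA m n * BB m n * x^n)"
  proof (rule sum.cong[OF refl])
    fix n assume n: "n \<in> {..m}"
    have "(\<Sum>j\<le>m. if j \<le> n then f j (n - j) else 0) = (\<Sum>j\<le>n. f j (n - j))"
      using n by (simp add: sum_guard_le)
    also have "\<dots> = (\<Sum>j\<le>n. real ((2*m+1) choose (2*j)) * real ((m-j) choose (n-j)) * BB m n * x^n)"
    proof (rule sum.cong[OF refl])
      fix j assume "j \<in> {..n}"
      then have j: "j \<le> n" by simp
      have "x^j * x^(n-j) = x^n" using j by (simp flip: power_add)
      moreover have "j + (n-j) = n" using j by simp
      ultimately show "f j (n - j) = real ((2*m+1) choose (2*j)) * real ((m-j) choose (n-j)) * BB m n * x^n"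
        unfolding f_def by (simp add: algebra_simps)
    qed
    also have "\<dots> = AA m n * BB m n * x^n"
      by (simp add: AA_def sum_distrib_right)
    finally show "(\<Sum>j\<le>m. if j \<le> n then f j (n - j) else 0) = AA m n * BB m n * x^n" .
  qed
  finally show ?thesis by (simp add: x_def)
qed



lemma d_coef_ee: "d_coef l m = (\<Sum>k=l..m. ee m k * real (k choose l))"
  unfolding d_coef_def ee_def by (simp add: sum_distrib_left algebra_simps)

lemma P_poly_ee: "P_poly m a = (\<Sum>n\<le>m. ee m n * (a+1)^n)"
proof -
  have "P_poly m a = (\<Sum>l\<le>m. \<Sum>k\<le>m. ee m k * real (k choose l) * a^l)"
    unfolding P_poly_def d_coef_ee atLeast0AtMost
  proof (rule sum.cong[OF refl])
    fix l assume "l \<in> {..m}"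
    have "(\<Sum>k=l..m. ee m k * real (k choose l)) = (\<Sum>k\<le>m. ee m k * real (k choose l))"
      by (rule sum.mono_neutral_left) auto
    then show "(\<Sum>k=l..m. ee m k * real (k choose l)) * a ^ l = (\<Sum>k\<le>m. ee m k * real (k choose l) * a^l)"
      by (simp add: sum_distrib_right)
  qed
  also have "\<dots> = (\<Sum>k\<le>m. \<Sum>l\<le>m. ee m k * real (k choose l) * a^l)"
    by (rule sum.swap)
  also have "\<dots> = (\<Sum>k\<le>m. ee m k * (a+1)^k)"
  proof (rule sum.cong[OF refl])
    fix k assume "k \<in> {..m}"
    then have k: "k \<le> m" by simp
    have "(a+1)^k = (\<Sum>l\<le>k. real (k choose l) * a^l)"
      using binomial_ring[of a 1 k] by simp
    also have "\<dots> = (\<Sum>l\<le>m. real (k choose l) * a^l)"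
      using k by (intro sum.mono_neutral_left) auto
    finally show "(\<Sum>l\<le>m. ee m k * real (k choose l) * a^l) = ee m k * (a+1)^k"
      by (simp add: sum_distrib_left mult.assoc)
  qed
  finally show ?thesis .
qed

lemma part2: "P_poly m a = RHS2 m a"
  unfolding P_poly_ee RHS2_eq by (rule sum.cong[OF refl]) (simp add: AB_ee)



definition gam :: "nat \<Rightarrow> nat \<Rightarrow> nat \<Rightarrow> real" where
  "gam J r l = (\<Sum>j\<le>l. real (J choose j) * real (r choose (l-j)) * (-1)^(r-(l-j)))"

lemma prod_expand:
  assumes "J + r \<le> m"
  shows "(a+1)^J * (a-1)^r = (\<Sum>l\<le>m. gam J r l * a^l)"
proof -
  define G where "G j i = real (J choose j) * real (r choose i) * (-1::real)^(r-i)" for j i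
  have b1: "(a+1)^J = (\<Sum>j\<le>J. real (J choose j) * a^j)"
    using binomial_ring[of a 1 J] by simp
  have b2: "(a-1)^r = (\<Sum>i\<le>r. real (r choose i) * a^i * (-1)^(r-i))"
    using binomial_ring[of a "-1" r] by simp
  have "(\<Sum>l\<le>m. gam J r l * a^l) = (\<Sum>l\<le>m. \<Sum>j\<le>m. if j \<le> l then G j (l-j) * a^l else 0)"
    by (rule sum.cong[OF refl]) (simp add: gam_def sum_guard_le sum_distrib_right G_def)
  also have "\<dots> = (\<Sum>j\<le>m. \<Sum>l\<le>m. if j \<le> l then G j (l-j) * a^l else 0)"
    by (rule sum.swap)
  also have "\<dots> = (\<Sum>j\<le>m. \<Sum>i\<le>m-j. G j i * a^(j+i))"
  proof (rule sum.cong[OF refl])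
    fix j assume j: "j \<in> {..m}"
    have "(\<Sum>l\<le>m. if j \<le> l then G j (l-j) * a^l else 0) = (\<Sum>l\<le>m. if j \<le> l then G j (l-j) * a^(j+(l-j)) else 0)"
      by (rule sum.cong) auto
    also have "\<dots> = (\<Sum>i\<le>m-j. G j i * a^(j+i))"
      using j by (subst sum_shift_guard) auto
    finally show "(\<Sum>l\<le>m. if j \<le> l then G j (l-j) * a^l else 0) = (\<Sum>i\<le>m-j. G j i * a^(j+i))" .
  qed
  also have "\<dots> = (\<Sum>j\<le>J. \<Sum>i\<le>m-j. G j i * a^(j+i))"
  proof (rule sum.mono_neutral_right)
    show "\<forall>j\<in>{..m} - {..J}. (\<Sum>i\<le>m-j. G j i * a^(j+i)) = 0"
    proof
      fix j assume "j \<in> {..m} - {..J}"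
      then have "J < j" by auto
      then show "(\<Sum>i\<le>m-j. G j i * a^(j+i)) = 0" by (simp add: G_def binomial_eq_0)
    qed
  qed (use assms in auto)
  also have "\<dots> = (\<Sum>j\<le>J. \<Sum>i\<le>r. G j i * a^(j+i))"
  proof (rule sum.cong[OF refl])
    fix j assume "j \<in> {..J}"
    then have "r \<le> m - j" using assms by auto
    then show "(\<Sum>i\<le>m-j. G j i * a^(j+i)) = (\<Sum>i\<le>r. G j i * a^(j+i))"
      by (intro sum.mono_neutral_right) (auto simp: G_def)
  qed
  also have "\<dots> = (a+1)^J * (a-1)^r"
    unfolding b1 b2 sum_product G_def
    by (rule sum.cong[OF refl], rule sum.cong[OF refl]) (simp add: power_add algebra_simps)
  finally show ?thesis by simp
qed

definition WW :: "nat \<Rightarrow> nat \<Rightarrow> nat \<Rightarrow> real" where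
  "WW m J r = real ((2*m+1) choose (2*J)) * real ((m-J) choose r) * cc (J+r)"

definition R1' :: "nat \<Rightarrow> nat \<Rightarrow> real" where
  "R1' m l = (\<Sum>J\<le>m. \<Sum>r\<le>m-J. WW m J r * gam J r l)"

lemma RHS2_R1': "RHS2 m a = (\<Sum>l\<le>m. R1' m l * a^l)"
proof -
  have "RHS2 m a = (\<Sum>J=0..m. \<Sum>r\<le>m-J. WW m J r * ((a+1)^J * (a-1)^r))"
    unfolding RHS2_def
  proof (rule sum.cong[OF refl])
    fix J assume "J \<in> {0..m}"
    then have J: "J \<le> m" by simp
    show "real ((2*m+1) choose (2*J)) * (a + 1) ^ J *
         (\<Sum>k=0..m-J. real ((m - J) choose k) * real ((2*(m-k)) choose (m-k)) / 2 ^ (3*(m-k)) * (a - 1) ^ (m - k - J))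
        = (\<Sum>r\<le>m-J. WW m J r * ((a+1)^J * (a-1)^r))"
      unfolding inner_reflect[OF J] by (simp add: WW_def sum_distrib_left algebra_simps)
  qed
  also have "\<dots> = (\<Sum>J\<le>m. \<Sum>r\<le>m-J. \<Sum>l\<le>m. WW m J r * gam J r l * a^l)"
    unfolding atLeast0AtMost
  proof (intro sum.cong refl)
    fix J r assume "J \<in> {..m}" "r \<in> {..m-J}"
    then have "J + r \<le> m" by auto
    then show "WW m J r * ((a+1)^J * (a-1)^r) = (\<Sum>l\<le>m. WW m J r * gam J r l * a^l)"
      by (simp add: prod_expand[of J r m] sum_distrib_left mult.assoc)
  qed
  also have "\<dots> = (\<Sum>J\<le>m. \<Sum>l\<le>m. \<Sum>r\<le>m-J. WW m J r * gam J r l * a^l)"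
    by (intro sum.cong refl sum.swap)
  also have "\<dots> = (\<Sum>l\<le>m. \<Sum>J\<le>m. \<Sum>r\<le>m-J. WW m J r * gam J r l * a^l)"
    by (rule sum.swap)
  also have "\<dots> = (\<Sum>l\<le>m. R1' m l * a^l)"
    by (simp add: R1'_def sum_distrib_right)
  finally show ?thesis .
qed



lemma reindex_gen:
  fixes Y :: "nat \<Rightarrow> nat \<Rightarrow> real"
  assumes jl: "j \<le> l" and lm: "l \<le> m"
    and z1: "\<And>J r. J < j \<Longrightarrow> Y J r = 0"
    and z2: "\<And>J r. r < l - j \<Longrightarrow> Y J r = 0"
  shows "(\<Sum>J\<le>m. \<Sum>r\<le>m-J. Y J r) = (\<Sum>s=0..m-l. \<Sum>k=s+l..m. Y (j+s) (k-(j+s)))"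
proof -
  define \<Phi> where "\<Phi> J = (\<Sum>r\<le>m-J. Y J r)" for J
  have "(\<Sum>J\<le>m. \<Phi> J) = (\<Sum>J\<le>m. if j \<le> J then \<Phi> (j + (J - j)) else 0)"
    by (rule sum.cong[OF refl]) (auto simp: \<Phi>_def z1)
  also have "\<dots> = (\<Sum>s\<le>m-j. \<Phi> (j+s))"
    using jl lm by (subst sum_shift_guard) auto
  also have "\<dots> = (\<Sum>s\<le>m-l. \<Phi> (j+s))"
  proof (rule sum.mono_neutral_right)
    show "\<forall>s\<in>{..m-j} - {..m-l}. \<Phi> (j+s) = 0"
    proof
      fix s assume "s \<in> {..m-j} - {..m-l}"
      then have "m - l < s" "s \<le> m - j" by auto
      then show "\<Phi> (j+s) = 0" unfolding \<Phi>_def using jl lm by (intro sum.neutral) (auto intro!: z2)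
    qed
  qed (use jl in auto)
  also have "\<dots> = (\<Sum>s=0..m-l. \<Sum>k=s+l..m. Y (j+s) (k-(j+s)))"
    unfolding atLeast0AtMost[symmetric]
  proof (rule sum.cong[OF refl])
    fix s assume "s \<in> {0..m-l}"
    then have s: "s \<le> m - l" by simp
    have "\<Phi> (j+s) = (\<Sum>r\<in>{l-j..m-(j+s)}. Y (j+s) r)"
      unfolding \<Phi>_def by (rule sum.mono_neutral_right) (auto intro!: z2)
    also have "\<dots> = (\<Sum>k\<in>{l-j+(j+s)..m-(j+s)+(j+s)}. Y (j+s) (k-(j+s)))"
      using sum.shift_bounds_cl_nat_ivl[of "\<lambda>k. Y (j+s) (k-(j+s))" "l-j" "j+s" "m-(j+s)"] by simp
    finally have X: "\<Phi> (j+s) = (\<Sum>k\<in>{l-j+(j+s)..m-(j+s)+(j+s)}. Y (j+s) (k-(j+s)))" .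
    have b: "l-j+(j+s) = s+l" "m-(j+s)+(j+s) = m" using jl lm s by auto
    show "\<Phi> (j+s) = (\<Sum>k=s+l..m. Y (j+s) (k-(j+s)))" using X unfolding b .
  qed
  finally show ?thesis unfolding \<Phi>_def .
qed

definition R1 :: "nat \<Rightarrow> nat \<Rightarrow> real" where
  "R1 m l = (\<Sum>j=0..l. \<Sum>s=0..m-l. \<Sum>k=s+l..m.
         (-1) ^ (k - l - s) / 2 ^ (3*k) * real ((2*k) choose k) * real ((2*m+1) choose (2*s+2*j))
         * real ((m - s - j) choose (m - k)) * real ((s + j) choose j) * real ((k - s - j) choose (l - j)))"

lemma R1_eq: assumes lm: "l \<le> m" shows "R1' m l = R1 m l"
proof -
  define Y where "Y j J r = WW m J r * (real (J choose j) * real (r choose (l-j)) * (-1)^(r-(l-j)))" for j J r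
  have "R1' m l = (\<Sum>J\<le>m. \<Sum>r\<le>m-J. \<Sum>j\<le>l. Y j J r)"
    unfolding R1'_def gam_def Y_def by (simp add: sum_distrib_left)
  also have "\<dots> = (\<Sum>J\<le>m. \<Sum>j\<le>l. \<Sum>r\<le>m-J. Y j J r)"
    by (intro sum.cong refl sum.swap)
  also have "\<dots> = (\<Sum>j\<le>l. \<Sum>J\<le>m. \<Sum>r\<le>m-J. Y j J r)"
    by (rule sum.swap)
  also have "\<dots> = (\<Sum>j\<le>l. \<Sum>s=0..m-l. \<Sum>k=s+l..m. Y j (j+s) (k-(j+s)))"
  proof (rule sum.cong[OF refl])
    fix j assume "j \<in> {..l}"
    then have j: "j \<le> l" by simp
    show "(\<Sum>J\<le>m. \<Sum>r\<le>m-J. Y j J r) = (\<Sum>s=0..m-l. \<Sum>k=s+l..m. Y j (j+s) (k-(j+s)))"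
      by (rule reindex_gen[OF j lm]) (auto simp: Y_def binomial_eq_0)
  qed
  also have "\<dots> = R1 m l"
    unfolding R1_def atLeast0AtMost[of l]
  proof (intro sum.cong refl)
    fix j s k assume "j \<in> {..l}" "s \<in> {0..m-l}" "k \<in> {s+l..m}"
    then have j: "j \<le> l" and s: "s \<le> m-l" and k1: "s+l \<le> k" and k2: "k \<le> m" by auto
    have e1: "2*(j+s) = 2*s+2*j" by simp
    have e2: "(m-(j+s)) choose (k-(j+s)) = (m-s-j) choose (m-k)"
    proof -
      have "(m-(j+s)) choose (k-(j+s)) = (m-(j+s)) choose ((m-(j+s)) - (k-(j+s)))"
        using k1 k2 j by (intro binomial_symmetric) auto
      moreover have "(m-(j+s)) - (k-(j+s)) = m - k" "m-(j+s) = m-s-j" using k1 k2 j by auto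
      ultimately show ?thesis by simp
    qed
    have e3: "j+s+(k-(j+s)) = k" using k1 j by auto
    have e6: "k - (j + (s + (l - j))) = k - (l + s)" using j by simp
    have e4: "k-(j+s) = k-s-j" "(k-(j+s))-(l-j) = k-l-s" "j+s = s+j" using k1 j by auto
    show "Y j (j+s) (k-(j+s)) =
         (-1) ^ (k - l - s) / 2 ^ (3*k) * real ((2*k) choose k) * real ((2*m+1) choose (2*s+2*j))
         * real ((m - s - j) choose (m - k)) * real ((s + j) choose j) * real ((k - s - j) choose (l - j))"
      unfolding Y_def WW_def unfolding e3 unfolding e2 unfolding e1 unfolding e4 cc_def
      using e6 by (simp add: algebra_simps)
  qed
  finally show ?thesis .
qed

lemma part1: assumes "l \<le> m" shows "d_coef l m = R1 m l"
proof -
  have "\<forall>a. (\<Sum>i\<le>m. d_coef i m * a^i) = (\<Sum>i\<le>m. R1' m i * a^i)"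
    using part2 RHS2_R1' by (simp add: P_poly_def atLeast0AtMost)
  then have "d_coef l m = R1' m l" using assms by (simp add: polyfun_eq_coeffs)
  then show ?thesis using R1_eq[OF assms] by simp
qed


theorem mainTheorem2:
  fixes l m :: nat
  assumes "l \<le> m"
  shows "d_coef l m =
      (\<Sum>j=0..l. \<Sum>s=0..m-l. \<Sum>k=s+l..m.
         (-1) ^ (k - l - s) / 2 ^ (3*k) * real ((2*k) choose k) * real ((2*m+1) choose (2*s+2*j))
         * real ((m - s - j) choose (m - k)) * real ((s + j) choose j) * real ((k - s - j) choose (l - j)))
    \<and> (\<forall>a::real. P_poly m a =
      (\<Sum>j=0..m. real ((2*m+1) choose (2*j)) * (a + 1) ^ j *
         (\<Sum>k=0..m-j. real ((m - j) choose k) * real ((2*(m-k)) choose (m-k)) / 2 ^ (3*(m-k))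
            * (a - 1) ^ (m - k - j))))"
  proof (intro conjI allI)
  show "d_coef l m =
      (\<Sum>j=0..l. \<Sum>s=0..m-l. \<Sum>k=s+l..m.
         (-1) ^ (k - l - s) / 2 ^ (3*k) * real ((2*k) choose k) * real ((2*m+1) choose (2*s+2*j))
         * real ((m - s - j) choose (m - k)) * real ((s + j) choose j) * real ((k - s - j) choose (l - j)))"
    using part1[OF assms] unfolding R1_def .
next
  fix a :: real
  show "P_poly m a =
      (\<Sum>j=0..m. real ((2*m+1) choose (2*j)) * (a + 1) ^ j *
         (\<Sum>k=0..m-j. real ((m - j) choose k) * real ((2*(m-k)) choose (m-k)) / 2 ^ (3*(m-k))
            * (a - 1) ^ (m - k - j)))"
    using part2[of m a] unfolding RHS2_def .
qed

end
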